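(* Let $K$ be a skew field with center $P$ and an involution, $\mathcal C$ a linear category over $P$ with involution, and $S_0$ a set of objects containing exactly one object from each pair $\{u,u^*\}$. If a representation $A$ of $\mathcal C$ over $K$ is isomorphic to a selfadjoint representation, then there exist a selfadjoint representation $B$ and an isomorphism $h:A\to B$ such that $B_v=A_v$ and $h_v=1$ for all $v\in S_0$.
   Context: $K$ has an involution $a\mapsto\bar a$. Linear category over $P$: $P$-vector-space Hom sets, bilinear composition; involution on it: $u\mapsto u^*$, $(\alpha:u\to v)\mapsto(\alpha^*:v^*\to u^* )$, $u^{**}=u\ne u^*$, $\alpha^{**}=\alpha$, $(\alpha\beta)^*=\beta^*\alpha^*$, $(\alpha a)^*=\alpha^*\bar a$. Representations: functors to finite-dimensional right $K$-spaces, finite total dimension, preserving $P$-linear combinations; morphisms: natural transformations. $V^*$: semilinear forms ($\varphi(xa)=\bar a\varphi(x)$), $A^*\varphi=\varphi A$, $V^{**}=V$. Adjoint representation: $A^\circ_u=(A_{u^*})^*$, $A^\circ_\alpha=(A_{\alpha^*})^*$; selfadjoint means $A=A^\circ$. *)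

theory Defs
  imports "Jordan_Normal_Form.Matrix"
begin

definition involution :: "('k::division_ring \<Rightarrow> 'k) \<Rightarrow> bool" where
  "involution bar \<longleftrightarrow>
     (\<forall>a b. bar (a + b) = bar a + bar b) \<and>
     (\<forall>a b. bar (a * b) = bar b * bar a) \<and>
     (\<forall>a. bar (bar a) = a)"

definition center :: "'k::division_ring set" where
  "center = {c. \<forall>x. c * x = x * c}"

text \<open>A category whose objects are the elements of type 'o and whose morphisms are the
  elements of type 'm; comp al be is the composite al be (first be, then al);
  sc al a is the scalar multiple al a (a in P); ostar, mstar is the involution.\<close>
record ('o, 'm, 'k) lincat =
  dom :: "'m \<Rightarrow> 'o"
  cod :: "'m \<Rightarrow> 'o"
  comp :: "'m \<Rightarrow> 'm \<Rightarrow> 'm"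
  ident :: "'o \<Rightarrow> 'm"
  add :: "'m \<Rightarrow> 'm \<Rightarrow> 'm"
  zero :: "'o \<Rightarrow> 'o \<Rightarrow> 'm"
  sc :: "'m \<Rightarrow> 'k \<Rightarrow> 'm"
  ostar :: "'o \<Rightarrow> 'o"
  mstar :: "'m \<Rightarrow> 'm"

definition parallel :: "('o, 'm, 'k) lincat \<Rightarrow> 'm \<Rightarrow> 'm \<Rightarrow> bool" where
  "parallel C al be \<longleftrightarrow> dom C al = dom C be \<and> cod C al = cod C be"

definition lincat_inv :: "('k::division_ring \<Rightarrow> 'k) \<Rightarrow> ('o, 'm, 'k) lincat \<Rightarrow> bool" where
  "lincat_inv bar C \<longleftrightarrow>
    \<comment> \<open>category\<close>
    (\<forall>u. dom C (ident C u) = u \<and> cod C (ident C u) = u) \<and>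
    (\<forall>al. comp C al (ident C (dom C al)) = al \<and> comp C (ident C (cod C al)) al = al) \<and>
    (\<forall>al be. dom C al = cod C be \<longrightarrow>
        dom C (comp C al be) = dom C be \<and> cod C (comp C al be) = cod C al) \<and>
    (\<forall>al be ga. dom C al = cod C be \<longrightarrow> dom C be = cod C ga \<longrightarrow>
        comp C (comp C al be) ga = comp C al (comp C be ga)) \<and>
    \<comment> \<open>Hom(u,v) is an abelian group\<close>
    (\<forall>u v. dom C (zero C u v) = u \<and> cod C (zero C u v) = v) \<and>
    (\<forall>al be. parallel C al be \<longrightarrow> parallel C (add C al be) al) \<and>
    (\<forall>al be. parallel C al be \<longrightarrow> add C al be = add C be al) \<and>
    (\<forall>al be ga. parallel C al be \<longrightarrow> parallel C al ga \<longrightarrow>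
        add C (add C al be) ga = add C al (add C be ga)) \<and>
    (\<forall>al. add C al (zero C (dom C al) (cod C al)) = al) \<and>
    (\<forall>al. \<exists>be. parallel C al be \<and> add C al be = zero C (dom C al) (cod C al)) \<and>
    \<comment> \<open>P-vector space structure (right scalar multiplication by elements of P)\<close>
    (\<forall>al a. a \<in> center \<longrightarrow> parallel C (sc C al a) al) \<and>
    (\<forall>al. sc C al 1 = al) \<and>
    (\<forall>al a b. a \<in> center \<longrightarrow> b \<in> center \<longrightarrow> sc C (sc C al a) b = sc C al (a * b)) \<and>
    (\<forall>al a b. a \<in> center \<longrightarrow> b \<in> center \<longrightarrow>
        sc C al (a + b) = add C (sc C al a) (sc C al b)) \<and>
    (\<forall>al be a. a \<in> center \<longrightarrow> parallel C al be \<longrightarrow>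
        sc C (add C al be) a = add C (sc C al a) (sc C be a)) \<and>
    \<comment> \<open>bilinear composition\<close>
    (\<forall>al be ga. parallel C be ga \<longrightarrow> dom C al = cod C be \<longrightarrow>
        comp C al (add C be ga) = add C (comp C al be) (comp C al ga)) \<and>
    (\<forall>al be ga. parallel C al be \<longrightarrow> dom C al = cod C ga \<longrightarrow>
        comp C (add C al be) ga = add C (comp C al ga) (comp C be ga)) \<and>
    (\<forall>al be a. a \<in> center \<longrightarrow> dom C al = cod C be \<longrightarrow>
        comp C (sc C al a) be = sc C (comp C al be) a \<and>
        comp C al (sc C be a) = sc C (comp C al be) a) \<and>
    \<comment> \<open>involution\<close>
    (\<forall>u. ostar C (ostar C u) = u \<and> ostar C u \<noteq> u) \<and>
    (\<forall>al. dom C (mstar C al) = ostar C (cod C al) \<and> cod C (mstar C al) = ostar C (dom C al)) \<and>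
    (\<forall>al. mstar C (mstar C al) = al) \<and>
    (\<forall>al be. dom C al = cod C be \<longrightarrow>
        mstar C (comp C al be) = comp C (mstar C be) (mstar C al)) \<and>
    (\<forall>al a. a \<in> center \<longrightarrow> mstar C (sc C al a) = sc C (mstar C al) (bar a))"

text \<open>Representations in coordinates: the space at object u is K^(rdim u) (column
  vectors, right K-space), a morphism al : u \<rightarrow> v acts by the matrix rmap al
  (rdim v \<times> rdim u).\<close>
record ('o, 'm, 'k) rep =
  rdim :: "'o \<Rightarrow> nat"
  rmap :: "'m \<Rightarrow> 'k mat"

definition is_rep :: "('o, 'm, 'k::division_ring) lincat \<Rightarrow> ('o, 'm, 'k) rep \<Rightarrow> bool" where
  "is_rep C A \<longleftrightarrow>
    finite {u. rdim A u \<noteq> 0} \<and>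
    (\<forall>al. rmap A al \<in> carrier_mat (rdim A (cod C al)) (rdim A (dom C al))) \<and>
    (\<forall>u. rmap A (ident C u) = 1\<^sub>m (rdim A u)) \<and>
    (\<forall>al be. dom C al = cod C be \<longrightarrow> rmap A (comp C al be) = rmap A al * rmap A be) \<and>
    (\<forall>al be. parallel C al be \<longrightarrow> rmap A (add C al be) = rmap A al + rmap A be) \<and>
    (\<forall>al a. a \<in> center \<longrightarrow> rmap A (sc C al a) = a \<cdot>\<^sub>m rmap A al)"

text \<open>Conjugate transpose = matrix of the dual map A^* in dual coordinates
  (semilinear form with coefficient vector c: x \<mapsto> \<Sum> bar x_i c_i).\<close>
definition conjT :: "('k \<Rightarrow> 'k) \<Rightarrow> 'k mat \<Rightarrow> 'k mat" where
  "conjT bar M = map_mat bar (transpose_mat M)"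

definition adjoint :: "('k \<Rightarrow> 'k) \<Rightarrow> ('o, 'm, 'k) lincat \<Rightarrow> ('o, 'm, 'k) rep \<Rightarrow> ('o, 'm, 'k) rep" where
  "adjoint bar C A = \<lparr> rdim = (\<lambda>u. rdim A (ostar C u)),
                       rmap = (\<lambda>al. conjT bar (rmap A (mstar C al))) \<rparr>"

definition selfadjoint :: "('k \<Rightarrow> 'k) \<Rightarrow> ('o, 'm, 'k) lincat \<Rightarrow> ('o, 'm, 'k) rep \<Rightarrow> bool" where
  "selfadjoint bar C A \<longleftrightarrow> A = adjoint bar C A"

definition rep_iso :: "('o, 'm, 'k::division_ring) lincat \<Rightarrow> ('o, 'm, 'k) rep \<Rightarrow> ('o, 'm, 'k) rep
     \<Rightarrow> ('o \<Rightarrow> 'k mat) \<Rightarrow> bool" where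
  "rep_iso C A B h \<longleftrightarrow>
    (\<forall>u. h u \<in> carrier_mat (rdim B u) (rdim A u) \<and> invertible_mat (h u)) \<and>
    (\<forall>al. h (cod C al) * rmap A al = rmap B al * h (dom C al))"

end

theory Submission imports Defs begin

lemma inv_bar0: assumes "involution bar" shows "bar 0 = (0::'k::division_ring)"
proof -
  have "bar (0+0) = bar 0 + bar 0" using assms unfolding involution_def by blast
  then show ?thesis by simp
qed

lemma inv_bar1: assumes "involution bar" shows "bar 1 = (1::'k::division_ring)"
proof -
  have m: "\<And>a b. bar (a * b) = bar b * bar a" and bb: "\<And>a. bar (bar a) = a"
    using assms unfolding involution_def by auto
  have "bar 1 \<noteq> 0" using bb[of 1] inv_bar0[OF assms] by (metis one_neq_zero)
  moreover have "bar 1 * bar 1 = bar 1" using m[of 1 1] by simp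
  ultimately show ?thesis
    by (metis mult.right_neutral mult_left_cancel)
qed

lemma inv_bar_sum: assumes "involution bar"
  shows "bar (sum f I) = (\<Sum>i\<in>I. bar (f i :: 'k::division_ring))"
proof (induction I rule: infinite_finite_induct)
  case (infinite A) then show ?case using inv_bar0[OF assms] by simp
next
  case empty then show ?case using inv_bar0[OF assms] by simp
next
  case (insert x F) then show ?case using assms unfolding involution_def by simp
qed

lemma conjT_carrier: "M \<in> carrier_mat n m \<Longrightarrow> conjT bar M \<in> carrier_mat m n"
  unfolding conjT_def carrier_mat_def by simp

lemma conjT_conjT: assumes "involution bar" shows "conjT bar (conjT bar M) = M"
  using assms unfolding conjT_def involution_def by (intro eq_matI) auto

lemma conjT_one: assumes "involution bar" shows "conjT bar (1\<^sub>m n) = (1\<^sub>m n :: 'k::division_ring mat)"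
  unfolding conjT_def by (intro eq_matI) (auto simp: inv_bar0[OF assms] inv_bar1[OF assms])

lemma conjT_mult: assumes inv: "involution bar" and A: "A \<in> carrier_mat n k"
  and B: "B \<in> carrier_mat k m"
  shows "conjT bar (A * B) = conjT bar B * (conjT bar A :: 'k::division_ring mat)"
proof (intro eq_matI)
  fix i j assume i: "i < dim_row (conjT bar B * conjT bar A)" and j: "j < dim_col (conjT bar B * conjT bar A)"
  have i': "i < m" and j': "j < n" using i j A B by (auto simp: conjT_def)
  have m: "\<And>a b. bar (a * b) = bar b * bar a" using inv unfolding involution_def by auto
  show "conjT bar (A * B) $$ (i, j) = (conjT bar B * conjT bar A) $$ (i, j)"
    using i' j' A B unfolding conjT_def
    by (simp add: scalar_prod_def inv_bar_sum[OF inv] m)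
qed (insert A B, auto simp: conjT_def)

lemma mult_central_right: assumes a: "a \<in> center" and A: "A \<in> carrier_mat n k"
  and B: "B \<in> carrier_mat k m"
  shows "A * (a \<cdot>\<^sub>m B) = a \<cdot>\<^sub>m (A * (B :: 'k::division_ring mat))"
proof (intro eq_matI)
  fix i j assume "i < dim_row (a \<cdot>\<^sub>m (A * B))" "j < dim_col (a \<cdot>\<^sub>m (A * B))"
  then have ij: "i < n" "j < m" using A B by auto
  have c: "\<And>x. a * x = x * a" using a unfolding center_def by auto
  show "(A * (a \<cdot>\<^sub>m B)) $$ (i, j) = (a \<cdot>\<^sub>m (A * B)) $$ (i, j)"
  proof -
    have "(\<Sum>l = 0..<k. A $$ (i, l) * B $$ (l, j) * a) = (\<Sum>l = 0..<k. A $$ (i, l) * a * B $$ (l, j))"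
      by (intro sum.cong refl) (metis c mult.assoc)
    then show ?thesis using ij A B by (simp add: scalar_prod_def sum_distrib_left sum_distrib_right c mult.assoc)
  qed
qed (insert A B, auto)

lemma mult_central_left: assumes a: "a \<in> center" and A: "A \<in> carrier_mat n k"
  and B: "B \<in> carrier_mat k m"
  shows "(a \<cdot>\<^sub>m A) * B = a \<cdot>\<^sub>m (A * (B :: 'k::division_ring mat))"
proof (intro eq_matI)
  fix i j assume "i < dim_row (a \<cdot>\<^sub>m (A * B))" "j < dim_col (a \<cdot>\<^sub>m (A * B))"
  then have ij: "i < n" "j < m" using A B by auto
  show "((a \<cdot>\<^sub>m A) * B) $$ (i, j) = (a \<cdot>\<^sub>m (A * B)) $$ (i, j)"
    using ij A B by (simp add: scalar_prod_def sum_distrib_left mult.assoc)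
qed (insert A B, auto)

lemma mat_comp3:
  fixes P X Y Q Q' P' :: "'a::semiring_1 mat"
  assumes P: "P \<in> carrier_mat n1 n1" and X: "X \<in> carrier_mat n1 n2" and Y: "Y \<in> carrier_mat n2 n3"
    and Q: "Q \<in> carrier_mat n3 n3" and Q': "Q' \<in> carrier_mat n2 n2" and P': "P' \<in> carrier_mat n2 n2"
    and e: "Q' * P' = 1\<^sub>m n2"
  shows "P * (X * Y) * Q = (P * X * Q') * (P' * Y * Q)"
proof -
  have PX: "P * X \<in> carrier_mat n1 n2" using P X by simp
  have r: "P' * Y * Q = P' * (Y * Q)" using P' Y Q by (rule assoc_mult_mat)
  have "(P * X * Q') * (P' * Y * Q) = (P * X) * (Q' * (P' * (Y * Q)))"
    unfolding r using assoc_mult_mat[OF PX Q' mult_carrier_mat[OF P' mult_carrier_mat[OF Y Q]]] .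
  also have "Q' * (P' * (Y * Q)) = (Q' * P') * (Y * Q)"
    using assoc_mult_mat[OF Q' P' mult_carrier_mat[OF Y Q]] by simp
  also have "\<dots> = Y * Q" using e Y Q by simp
  moreover have "P * (X * Y) = (P * X) * Y" using assoc_mult_mat[OF P X Y] by simp
  moreover have "(P * X) * Y * Q = (P * X) * (Y * Q)" using assoc_mult_mat[OF PX Y Q] .
  ultimately show ?thesis by simp
qed

lemma mat_id3:
  fixes P Q :: "'a::semiring_1 mat"
  assumes "P \<in> carrier_mat n n" "Q \<in> carrier_mat n n" "P * Q = 1\<^sub>m n"
  shows "P * 1\<^sub>m n * Q = 1\<^sub>m n"
  using assms by simp

lemma mat_add3:
  fixes P X Y Q :: "'a::semiring_1 mat"
  assumes P: "P \<in> carrier_mat n1 n1" and X: "X \<in> carrier_mat n1 n2" and Y: "Y \<in> carrier_mat n1 n2"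
    and Q: "Q \<in> carrier_mat n2 n2"
  shows "P * (X + Y) * Q = P * X * Q + P * Y * Q"
  using assms by (simp add: mult_add_distrib_mat[of _ n1 n1] add_mult_distrib_mat[of _ n1 n2])

lemma mat_sc3:
  fixes P X Q :: "'k::division_ring mat"
  assumes a: "a \<in> center" and P: "P \<in> carrier_mat n1 n1" and X: "X \<in> carrier_mat n1 n2"
    and Q: "Q \<in> carrier_mat n2 n2"
  shows "P * (a \<cdot>\<^sub>m X) * Q = a \<cdot>\<^sub>m (P * X * Q)"
  using assms by (simp add: mult_central_right[OF a P X] mult_central_left[OF a, of _ n1 n2])

lemma mat_conj3:
  fixes P X Q :: "'k::division_ring mat"
  assumes inv: "involution bar" and P: "P \<in> carrier_mat n1 n1" and X: "X \<in> carrier_mat n1 n2"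
    and Q: "Q \<in> carrier_mat n2 n2"
  shows "conjT bar (P * X * Q) = conjT bar Q * conjT bar X * conjT bar P"
proof -
  have "conjT bar (P * X * Q) = conjT bar Q * conjT bar (P * X)"
    by (rule conjT_mult[OF inv mult_carrier_mat[OF P X] Q])
  also have "\<dots> = conjT bar Q * (conjT bar X * conjT bar P)"
    by (simp add: conjT_mult[OF inv P X])
  finally show ?thesis using P X Q conjT_carrier
    by (metis assoc_mult_mat)
qed

lemma mat_iso3:
  fixes P X Q P' G G' :: "'a::semiring_1 mat"
  assumes P: "P \<in> carrier_mat n1 n1" and X: "X \<in> carrier_mat n1 n2"
    and Q: "Q \<in> carrier_mat n2 n2" and P': "P' \<in> carrier_mat n2 n2"
    and G: "G \<in> carrier_mat n1 m1" and G': "G' \<in> carrier_mat n2 m2" and Z: "Z \<in> carrier_mat m1 m2"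
    and e: "Q * P' = 1\<^sub>m n2" and g: "G * Z = X * G'"
  shows "(P * G) * Z = (P * X * Q) * (P' * G')"
proof -
  have PX: "P * X \<in> carrier_mat n1 n2" using P X by simp
  have r: "Q * (P' * G') = (Q * P') * G'" using Q P' G' by (rule assoc_mult_mat[symmetric])
  have "(P * X * Q) * (P' * G') = (P * X) * ((Q * P') * G')"
    unfolding r[symmetric] using assoc_mult_mat[OF PX Q mult_carrier_mat[OF P' G']] .
  also have "\<dots> = P * (X * G')" using e G' P X by simp
  also have "\<dots> = P * (G * Z)" using g by simp
  finally show ?thesis using P G Z by simp
qed

lemma main_constr:
  fixes bar :: "'k::division_ring \<Rightarrow> 'k" and C :: "('o, 'm, 'k) lincat" and A' :: "('o, 'm, 'k) rep"
  assumes inv: "involution bar" and lc: "lincat_inv bar C" and rep: "is_rep C A'"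
    and sa: "selfadjoint bar C A'"
    and phi: "\<And>u. \<phi> u \<in> carrier_mat (rdim A' u) (rdim A' u)"
    and psi: "\<And>u. \<psi> u \<in> carrier_mat (rdim A' u) (rdim A' u)"
    and pp: "\<And>u. \<phi> u * \<psi> u = 1\<^sub>m (rdim A' u)"
    and pp': "\<And>u. \<psi> u * \<phi> u = 1\<^sub>m (rdim A' u)"
    and c1: "\<And>u. conjT bar (\<psi> (ostar C u)) = \<phi> u"
    and c2: "\<And>u. conjT bar (\<phi> (ostar C u)) = \<psi> u"
  shows "is_rep C \<lparr>rdim = rdim A', rmap = (\<lambda>al. \<phi> (cod C al) * rmap A' al * \<psi> (dom C al))\<rparr>
     \<and> selfadjoint bar C \<lparr>rdim = rdim A', rmap = (\<lambda>al. \<phi> (cod C al) * rmap A' al * \<psi> (dom C al))\<rparr>"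
    (is "is_rep C ?B \<and> _")
proof -
  note L = lc[unfolded lincat_inv_def parallel_def]
  note R = rep[unfolded is_rep_def parallel_def]
  have M: "\<And>al. rmap A' al \<in> carrier_mat (rdim A' (cod C al)) (rdim A' (dom C al))" using R by blast
  have sa1: "\<And>u. rdim A' u = rdim A' (ostar C u)"
    using arg_cong[OF sa[unfolded selfadjoint_def], of rdim] by (simp add: adjoint_def) (metis)
  have sa2: "\<And>al. rmap A' al = conjT bar (rmap A' (mstar C al))"
    using arg_cong[OF sa[unfolded selfadjoint_def], of rmap] by (simp add: adjoint_def) (metis)
  have "is_rep C ?B"
    unfolding is_rep_def
  proof (intro conjI allI impI)
    show "finite {u. rdim ?B u \<noteq> 0}" using R by simp
  next
    fix al show "rmap ?B al \<in> carrier_mat (rdim ?B (cod C al)) (rdim ?B (dom C al))"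
      using mult_carrier_mat[OF mult_carrier_mat[OF phi M[of al]] psi] by simp
  next
    fix u show "rmap ?B (ident C u) = 1\<^sub>m (rdim ?B u)"
      using L R phi[of u] psi[of u] pp[of u] by simp
  next
    fix al be assume d: "dom C al = cod C be"
    show "rmap ?B (comp C al be) = rmap ?B al * rmap ?B be"
      using L R d mat_comp3[OF phi M[of al] _ psi psi phi pp', of "rmap A' be"] M[of be] by simp
  next
    fix al be assume p: "parallel C al be"
    show "rmap ?B (add C al be) = rmap ?B al + rmap ?B be"
      using L R p[unfolded parallel_def] mat_add3[OF phi M[of al] _ psi, of "rmap A' be"] M[of be]
      unfolding parallel_def by simp
  next
    fix al and a :: 'k assume a: "a \<in> center"
    show "rmap ?B (sc C al a) = a \<cdot>\<^sub>m rmap ?B al"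
      using L R a mat_sc3[OF a phi M[of al] psi] unfolding parallel_def by simp
  qed
  moreover have "?B = adjoint bar C ?B"
  proof -
    have "rdim ?B = rdim (adjoint bar C ?B)" using sa1 by (auto simp: adjoint_def)
    moreover have "rmap ?B = rmap (adjoint bar C ?B)"
    proof
      fix al
      have dc: "dom C (mstar C al) = ostar C (cod C al)" "cod C (mstar C al) = ostar C (dom C al)"
        using L by auto
      have "rmap (adjoint bar C ?B) al = conjT bar (\<phi> (ostar C (dom C al)) * rmap A' (mstar C al) * \<psi> (ostar C (cod C al)))"
        by (simp add: adjoint_def dc)
      also have "\<dots> = \<phi> (cod C al) * rmap A' al * \<psi> (dom C al)"
        using mat_conj3[OF inv phi M[of "mstar C al"] psi] c1 c2 sa2[of al] by (simp add: dc)
      finally show "rmap ?B al = rmap (adjoint bar C ?B) al" by simp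
    qed
    ultimately show ?thesis by simp
  qed
  ultimately show ?thesis unfolding selfadjoint_def by simp
qed

lemma mat_inv_prod:
  fixes P G Gi Q :: "'a::semiring_1 mat"
  assumes P: "P \<in> carrier_mat n n" and G: "G \<in> carrier_mat n n" and Gi: "Gi \<in> carrier_mat n n"
    and Q: "Q \<in> carrier_mat n n" and e1: "P * Q = 1\<^sub>m n" and e2: "Q * P = 1\<^sub>m n"
    and e3: "G * Gi = 1\<^sub>m n" and e4: "Gi * G = 1\<^sub>m n"
  shows "invertible_mat (P * G)"
proof -
  have "(P * G) * (Gi * Q) = P * ((G * Gi) * Q)"
    using assoc_mult_mat[OF P G mult_carrier_mat[OF Gi Q]] assoc_mult_mat[OF G Gi Q] by simp
  also have "\<dots> = 1\<^sub>m n" using e3 e1 Q by simp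
  finally have a: "(P * G) * (Gi * Q) = 1\<^sub>m n" .
  have "(Gi * Q) * (P * G) = Gi * ((Q * P) * G)"
    using assoc_mult_mat[OF Gi Q mult_carrier_mat[OF P G]] assoc_mult_mat[OF Q P G] by simp
  also have "\<dots> = 1\<^sub>m n" using e2 e4 G by simp
  finally have b: "(Gi * Q) * (P * G) = 1\<^sub>m n" .
  show ?thesis unfolding invertible_mat_def inverts_mat_def
    using a b P G Gi Q by (intro conjI exI[of _ "Gi * Q"]) (auto simp: square_mat.simps)
qed

theorem lemma6:
  fixes bar :: "'k::division_ring \<Rightarrow> 'k"
    and C :: "('o, 'm, 'k) lincat"
    and S0 :: "'o set"
    and A :: "('o, 'm, 'k) rep"
  assumes "involution bar"
    and "lincat_inv bar C"
    and "\<forall>u. (u \<in> S0) \<noteq> (ostar C u \<in> S0)"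
    and "is_rep C A"
    and "\<exists>A' g. is_rep C A' \<and> selfadjoint bar C A' \<and> rep_iso C A A' g"
  shows "\<exists>B h. is_rep C B \<and> selfadjoint bar C B \<and> rep_iso C A B h \<and>
           (\<forall>v\<in>S0. rdim B v = rdim A v \<and> h v = 1\<^sub>m (rdim A v))"
proof -
  note inv = assms(1) and lc = assms(2) and S = assms(3)
  obtain A' g where rep: "is_rep C A'" and sa: "selfadjoint bar C A'" and iso: "rep_iso C A A' g"
    using assms(5) by blast
  note L = lc[unfolded lincat_inv_def parallel_def]
  have oo: "\<And>u. ostar C (ostar C u) = u" using L by blast
  have sa1: "\<And>u. rdim A' (ostar C u) = rdim A' u"
    using arg_cong[OF sa[unfolded selfadjoint_def], of rdim] by (simp add: adjoint_def) (metis)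
  define n where "n = rdim A'"
  have gc: "\<And>u. g u \<in> carrier_mat (n u) (rdim A u)" and gi: "\<And>u. invertible_mat (g u)"
    using iso unfolding rep_iso_def n_def by auto
  have nA: "rdim A u = n u" for u using gc[of u] gi[of u] unfolding invertible_mat_def carrier_mat_def
    by (auto simp: square_mat.simps)
  define ginv where "ginv u = (SOME M. inverts_mat (g u) M \<and> inverts_mat M (g u))" for u
  have ginv: "ginv u \<in> carrier_mat (n u) (n u) \<and> g u * ginv u = 1\<^sub>m (n u) \<and> ginv u * g u = 1\<^sub>m (n u)" for u
  proof -
    have "\<exists>M. inverts_mat (g u) M \<and> inverts_mat M (g u)" using gi[of u] unfolding invertible_mat_def by blast
    then have i: "inverts_mat (g u) (ginv u) \<and> inverts_mat (ginv u) (g u)"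
      unfolding ginv_def by (rule someI_ex)
    then have e1: "g u * ginv u = 1\<^sub>m (n u)" and e2: "ginv u * g u = 1\<^sub>m (dim_row (ginv u))"
      using gc[of u] unfolding inverts_mat_def by auto
    have "dim_row (ginv u) = n u" using arg_cong[OF e2, of dim_col] gc[of u] nA[of u] by simp
    moreover have "dim_col (ginv u) = n u" using arg_cong[OF e1, of dim_col] by simp
    ultimately show ?thesis using e1 e2 by auto
  qed
  have gc': "\<And>u. g u \<in> carrier_mat (n u) (n u)" using gc nA by simp
  have cc: "M \<in> carrier_mat (n (ostar C u)) (n (ostar C u)) \<Longrightarrow> conjT bar M \<in> carrier_mat (n u) (n u)" for u M
    using conjT_carrier[of M "n (ostar C u)" "n (ostar C u)" bar] sa1[of u] unfolding n_def by simp
  define \<phi> where "\<phi> u = (if u \<in> S0 then ginv u else conjT bar (g (ostar C u)))" for u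
  define \<psi> where "\<psi> u = (if u \<in> S0 then g u else conjT bar (ginv (ostar C u)))" for u
  have phi: "\<And>u. \<phi> u \<in> carrier_mat (n u) (n u)" unfolding \<phi>_def using ginv gc' cc by auto
  have psi: "\<And>u. \<psi> u \<in> carrier_mat (n u) (n u)" unfolding \<psi>_def using ginv gc' cc by auto
  have pp: "\<phi> u * \<psi> u = 1\<^sub>m (n u) \<and> \<psi> u * \<phi> u = 1\<^sub>m (n u)" for u
  proof (cases "u \<in> S0")
    case True then show ?thesis using ginv[of u] unfolding \<phi>_def \<psi>_def by simp
  next
    case False
    let ?v = "ostar C u"
    have "\<phi> u * \<psi> u = conjT bar (ginv ?v * g ?v)"
      using False conjT_mult[OF inv ginv[THEN conjunct1, of ?v] gc'[of ?v]] unfolding \<phi>_def \<psi>_def by simp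
    moreover have "\<psi> u * \<phi> u = conjT bar (g ?v * ginv ?v)"
      using False conjT_mult[OF inv gc'[of ?v] ginv[THEN conjunct1, of ?v]] unfolding \<phi>_def \<psi>_def by simp
    ultimately show ?thesis using ginv[of ?v] conjT_one[OF inv] sa1[of u] unfolding n_def by simp
  qed
  have c12: "conjT bar (\<psi> (ostar C u)) = \<phi> u \<and> conjT bar (\<phi> (ostar C u)) = \<psi> u" for u
  proof (cases "u \<in> S0")
    case True
    then have "ostar C u \<notin> S0" using S by blast
    then show ?thesis using True unfolding \<phi>_def \<psi>_def by (simp add: oo conjT_conjT[OF inv])
  next
    case False
    then have "ostar C u \<in> S0" using S by blast
    then show ?thesis using False unfolding \<phi>_def \<psi>_def by simp
  qed
  define B where "B = \<lparr>rdim = rdim A', rmap = (\<lambda>al. \<phi> (cod C al) * rmap A' al * \<psi> (dom C al))\<rparr>"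
  have B: "is_rep C B \<and> selfadjoint bar C B"
    unfolding B_def
    by (rule main_constr[OF inv lc rep sa]) (use phi psi pp c12 in \<open>auto simp: n_def\<close>)
  define h where "h u = \<phi> u * g u" for u
  have M: "\<And>al. rmap A' al \<in> carrier_mat (n (cod C al)) (n (dom C al))"
    using rep unfolding is_rep_def n_def by blast
  have MA: "\<And>al. rmap A al \<in> carrier_mat (n (cod C al)) (n (dom C al))"
    using assms(4) unfolding is_rep_def by (simp add: nA)
  have nat: "\<And>al. g (cod C al) * rmap A al = rmap A' al * g (dom C al)"
    using iso unfolding rep_iso_def by blast
  have "rep_iso C A B h"
    unfolding rep_iso_def
  proof (intro conjI allI)
    fix u
    show "h u \<in> carrier_mat (rdim B u) (rdim A u)"
      unfolding h_def B_def using phi[of u] gc[of u] by (simp add: n_def)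
    show "invertible_mat (h u)" unfolding h_def
      using mat_inv_prod[OF phi gc' ginv[THEN conjunct1] psi] pp ginv by blast
  next
    fix al
    show "h (cod C al) * rmap A al = rmap B al * h (dom C al)"
      unfolding h_def B_def
      using mat_iso3[OF phi M psi phi gc' gc' MA] pp nat by simp
  qed
  moreover have "\<forall>v\<in>S0. rdim B v = rdim A v \<and> h v = 1\<^sub>m (rdim A v)"
    using ginv nA unfolding h_def \<phi>_def B_def n_def by simp
  ultimately show ?thesis using B by blast
qed

end
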